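(* Let $m\ge2$, $n=3^{2m}-1$, and for $0\le j\le 2m-1$ let $S_{1j}=\{-3^i(3^j(3^m+1)+1)\bmod n : 0\le i\le 2m-1\}\subseteq\mathbb Z/n\mathbb Z$, and $S_1=\bigcup_{j=0}^{2m-1}S_{1j}$. Then: (1) $|S_{1j}|=2m$ for every $0\le j\le 2m-1$; (2) for $0\le j_1\ne j_2\le 2m-1$, either $S_{1j_1}\cap S_{1j_2}=\varnothing$ or $S_{1j_1}=S_{1j_2}$, and the latter holds if and only if $j_1\equiv j_2+m\pmod{2m}$; (3) $|S_1|=2m^2$. *)

theory Defs
  imports Main
begin

text \<open>Residues of Z/nZ are represented by their canonical representatives in {0..<n}
  (integers), with n = 3^(2m) - 1.\<close>

definition modulus :: "nat \<Rightarrow> int" where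
  "modulus m = 3 ^ (2*m) - 1"

definition S1j :: "nat \<Rightarrow> nat \<Rightarrow> int set" where
  "S1j m j = {(- (3 ^ i * (3 ^ j * (3 ^ m + 1) + 1))) mod modulus m | i. i \<le> 2*m - 1}"

definition S1 :: "nat \<Rightarrow> int set" where
  "S1 m = (\<Union>j\<in>{0..2*m-1}. S1j m j)"

end

theory Submission
  imports Defs "HOL-Number_Theory.Cong"
begin


lemma digits_unique:
  fixes d e :: "nat \<Rightarrow> nat"
  assumes "\<forall>k<N. d k < 3" "\<forall>k<N. e k < 3" "(\<Sum>k<N. d k * 3^k) = (\<Sum>k<N. e k * 3^k)"
  shows "\<forall>k<N. d k = e k"
  using assms
proof (induction N arbitrary: d e)
  case 0 then show ?case by simp
next
  case (Suc N)
  have sh: "\<And>f::nat\<Rightarrow>nat. (\<Sum>k<Suc N. f k * 3^k) = f 0 + 3 * (\<Sum>k<N. f (Suc k) * 3^k)"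
    unfolding sum.lessThan_Suc_shift by (simp add: sum_distrib_left algebra_simps)
  have eq: "d 0 + 3 * (\<Sum>k<N. d (Suc k) * 3^k) = e 0 + 3 * (\<Sum>k<N. e (Suc k) * 3^k)"
    using Suc.prems(3) sh by metis
  have d0: "d 0 < 3" "e 0 < 3" using Suc.prems by auto
  have h0: "d 0 = e 0"
  proof -
    have "(d 0 + 3 * (\<Sum>k<N. d (Suc k) * 3^k)) mod 3 = (e 0 + 3 * (\<Sum>k<N. e (Suc k) * 3^k)) mod 3"
      using eq by simp
    then show ?thesis using d0 by simp
  qed
  have "(\<Sum>k<N. d (Suc k) * 3^k) = (\<Sum>k<N. e (Suc k) * 3^k)" using eq h0 by simp
  moreover have "\<forall>k<N. d (Suc k) < 3" "\<forall>k<N. e (Suc k) < 3" using Suc.prems(1,2) by simp_all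
  ultimately have IH: "\<forall>k<N. d (Suc k) = e (Suc k)"
    using Suc.IH[of "\<lambda>k. d (Suc k)" "\<lambda>k. e (Suc k)"] by blast
  show ?case
  proof (intro allI impI)
    fix k assume "k < Suc N"
    then show "d k = e k" using h0 IH by (cases k) auto
  qed
qed

lemma shift:
  fixes m q :: nat
  assumes "q < 2*m"
  shows "(q+m) mod (2*m) = (if q < m then q+m else q - m)"
proof (cases "q < m")
  case True then show ?thesis by simp
next
  case False
  then have "(q+m) mod (2*m) = (q + m - 2*m) mod (2*m)" by (simp add: le_mod_geq)
  also have "\<dots> = q - m" using assms False by simp
  finally show ?thesis using False by simp
qed

lemma antip:
  fixes m p x :: nat
  assumes "m > 0" "p < 2*m" "x < 2*m"
  shows "((p+m) mod (2*m) = x) \<longleftrightarrow> (p = (x+m) mod (2*m))"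
proof -
  have a1: "(p+m) mod (2*m) = (if p < m then p+m else p - m)" using shift[OF assms(2)] .
  have a2: "(x+m) mod (2*m) = (if x < m then x+m else x - m)" using shift[OF assms(3)] .
  show ?thesis unfolding a1 a2 using assms(2,3) by (cases "p < m"; cases "x < m"; simp; linarith)
qed

lemma shift_ne:
  fixes m q :: nat
  assumes "m > 0" "q < 2*m"
  shows "(q+m) mod (2*m) \<noteq> q"
  using shift[OF assms(2)] assms by auto

definition D :: "nat \<Rightarrow> nat \<Rightarrow> nat \<Rightarrow> nat \<Rightarrow> nat" where
  "D m r j k = (if k = r mod (2*m) then 1 else 0) + (if k = (r+j) mod (2*m) then 1 else 0)
     + (if k = (r+j+m) mod (2*m) then 1 else 0)"

definition V :: "nat \<Rightarrow> nat \<Rightarrow> nat \<Rightarrow> nat" where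
  "V m r j = 3^(r mod (2*m)) + 3^((r+j) mod (2*m)) + 3^((r+j+m) mod (2*m))"

lemma delta_sum:
  assumes "a < N"
  shows "(\<Sum>k<N. (if k = a then 1 else 0) * (3::nat)^k) = 3^a"
proof -
  have "(\<Sum>k<N. (if k = a then 1 else 0) * (3::nat)^k) = (\<Sum>k<N. if k = a then 3^k else 0)"
    by (rule sum.cong) auto
  also have "\<dots> = 3^a" using assms by (simp add: sum.delta)
  finally show ?thesis .
qed

lemma D_sum:
  assumes "m > 0"
  shows "(\<Sum>k<2*m. D m r j k * 3^k) = V m r j"
proof -
  have "(\<Sum>k<2*m. D m r j k * 3^k) =
     (\<Sum>k<2*m. (if k = r mod (2*m) then 1 else 0) * 3^k) +
     (\<Sum>k<2*m. (if k = (r+j) mod (2*m) then 1 else 0) * 3^k) +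
     (\<Sum>k<2*m. (if k = (r+j+m) mod (2*m) then 1 else 0) * 3^k)"
    unfolding D_def by (simp add: distrib_right sum.distrib)
  also have "\<dots> = V m r j" unfolding V_def using assms
    by (simp add: delta_sum)
  finally show ?thesis .
qed

lemma vw_ne:
  fixes m r j :: nat
  assumes "m > 0"
  shows "(r+j) mod (2*m) \<noteq> (r+j+m) mod (2*m)"
proof -
  have "(r+j+m) mod (2*m) = ((r+j) mod (2*m) + m) mod (2*m)" by (simp add: mod_add_left_eq)
  then show ?thesis using shift_ne[of m "(r+j) mod (2*m)"] assms by auto
qed

lemma D_lt3:
  assumes "m > 0"
  shows "D m r j k < 3"
  using vw_ne[OF assms, of r j] unfolding D_def by auto

lemma D_key:
  assumes "m > 0" "p < 2*m" "r < 2*m"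
  shows "D m r j p + (if p = (r+m) mod (2*m) then 1 else 0)
       = D m r j ((p+m) mod (2*m)) + (if p = r then 1 else 0)"
proof -
  let ?N = "2*m"
  let ?v = "(r+j) mod ?N" and ?w = "(r+j+m) mod ?N"
  have vw: "(?v + m) mod ?N = ?w" by (simp add: mod_add_left_eq)
  have "(?w + m) mod ?N = (r+j + ?N) mod ?N" by (simp add: mod_add_left_eq add.assoc mult_2)
  then have wv: "(?w + m) mod ?N = ?v" by simp
  have v: "?v < ?N" and w: "?w < ?N" using assms by auto
  have e1: "((p+m) mod ?N = r) \<longleftrightarrow> p = (r+m) mod ?N" using antip[OF assms(1,2,3)] .
  have e2: "((p+m) mod ?N = ?v) \<longleftrightarrow> p = ?w" using antip[OF assms(1,2) v] vw by simp
  have e3: "((p+m) mod ?N = ?w) \<longleftrightarrow> p = ?v" using antip[OF assms(1,2) w] wv by simp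
  show ?thesis unfolding D_def using assms(3) e1 e2 e3 by simp
qed

lemma V_inj:
  assumes "m > 0" "r1 < 2*m" "r2 < 2*m" "j1 < 2*m" "j2 < 2*m"
    and eq: "V m r1 j1 = V m r2 j2"
  shows "r1 = r2 \<and> (j1 = j2 \<or> j1 = (j2+m) mod (2*m))"
proof -
  let ?N = "2*m"
  have dig: "\<forall>k<?N. D m r1 j1 k = D m r2 j2 k"
    by (rule digits_unique) (use D_lt3[OF assms(1)] D_sum[OF assms(1)] eq in auto)
  have a: "(r1+m) mod ?N < ?N" using assms by auto
  have ne: "r1 \<noteq> (r1+m) mod ?N" using shift_ne[OF assms(1,2)] by auto
  have k1: "D m r1 j1 r1 = D m r1 j1 ((r1+m) mod ?N) + 1"
    using D_key[OF assms(1,2,2), of j1] ne by simp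
  moreover have "D m r1 j1 r1 = D m r2 j2 r1" using dig assms(2) by blast
  moreover have "D m r1 j1 ((r1+m) mod ?N) = D m r2 j2 ((r1+m) mod ?N)" using dig a by blast
  ultimately have "D m r2 j2 r1 = D m r2 j2 ((r1+m) mod ?N) + 1" by simp
  then have rr: "r1 = r2"
  proof -
    assume h: "D m r2 j2 r1 = D m r2 j2 ((r1+m) mod ?N) + 1"
    obtain c where c: "D m r2 j2 r1 + c = D m r2 j2 ((r1+m) mod ?N) + (if r1 = r2 then 1 else 0)"
      using D_key[OF assms(1,2,3), of j2] by blast
    show ?thesis
    proof (rule ccontr)
      assume "r1 \<noteq> r2"
      then have "D m r2 j2 r1 + c = D m r2 j2 ((r1+m) mod ?N)" using c by simp
      then show False using h by linarith
    qed
  qed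
  have "D m r1 j1 ((r1+j1) mod ?N) = D m r1 j2 ((r1+j1) mod ?N)"
    using dig rr assms by auto
  moreover have "D m r1 j1 ((r1+j1) mod ?N) = (if (r1+j1) mod ?N = r1 mod ?N then 1 else 0) + 1"
    unfolding D_def using vw_ne[OF assms(1), of r1 j1] by simp
  moreover have "D m r1 j2 ((r1+j1) mod ?N) = (if (r1+j1) mod ?N = r1 mod ?N then 1 else 0)
     + (if (r1+j1) mod ?N = (r1+j2) mod ?N then 1 else 0) + (if (r1+j1) mod ?N = (r1+j2+m) mod ?N then 1 else 0)"
    unfolding D_def by simp
  ultimately have "(if (r1+j1) mod ?N = (r1+j2) mod ?N then 1 else 0) + (if (r1+j1) mod ?N = (r1+j2+m) mod ?N then 1 else (0::nat)) = 1"
    by linarith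
  then have "(r1+j1) mod ?N = (r1+j2) mod ?N \<or> (r1+j1) mod ?N = (r1+j2+m) mod ?N"
  proof -
    assume h: "(if (r1+j1) mod ?N = (r1+j2) mod ?N then 1 else 0) + (if (r1+j1) mod ?N = (r1+j2+m) mod ?N then 1 else (0::nat)) = 1"
    show ?thesis
    proof (rule ccontr)
      assume n: "\<not> ((r1+j1) mod ?N = (r1+j2) mod ?N \<or> (r1+j1) mod ?N = (r1+j2+m) mod ?N)"
      then have "(if (r1+j1) mod ?N = (r1+j2) mod ?N then 1 else 0) = (0::nat)"
        "(if (r1+j1) mod ?N = (r1+j2+m) mod ?N then 1 else 0) = (0::nat)" by (simp_all only: if_False de_Morgan_disj)
      then show False using h by linarith
    qed
  qed
  moreover have "(r1+j1) mod ?N = (r1+j2) mod ?N \<Longrightarrow> j1 mod ?N = j2 mod ?N"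
    using cong_add_lcancel_nat[of r1 j1 j2 ?N] unfolding cong_def by blast
  moreover have "(r1+j1) mod ?N = (r1+(j2+m)) mod ?N \<Longrightarrow> j1 mod ?N = (j2+m) mod ?N"
    using cong_add_lcancel_nat[of r1 j1 "j2+m" ?N] unfolding cong_def by blast
  ultimately have "j1 mod ?N = j2 mod ?N \<or> j1 mod ?N = (j2+m) mod ?N"
    by (auto simp only: add.assoc)
  then show ?thesis using rr assms by auto
qed



lemma pow_le3:
  fixes x N :: nat
  assumes "x < N" "N \<ge> 2"
  shows "(3::nat)^x \<le> 3 * 3^(N-2)"
proof -
  have "(3::nat)^x \<le> 3^(N-1)" using assms by (intro power_increasing) auto
  also have "N - 1 = Suc (N-2)" using assms by auto
  finally show ?thesis by simp
qed

lemma V_bound: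
  assumes "m > 0"
  shows "V m r j < 3^(2*m) - 1"
proof -
  let ?N = "2*m" let ?K = "(3::nat)^(?N-2)"
  let ?a = "r mod ?N" and ?b = "(r+j) mod ?N" and ?c = "(r+j+m) mod ?N"
  have N2: "?N \<ge> 2" using assms by auto
  have lt: "?a < ?N" "?b < ?N" "?c < ?N" using assms by auto
  have ne: "?b \<noteq> ?c" using vw_ne[OF assms] .
  have pa: "(3::nat)^?a \<le> 3 * ?K" using pow_le3[OF lt(1) N2] .
  have pbc: "(3::nat)^?b + 3^?c \<le> 4 * ?K"
  proof (cases "?b < ?c")
    case True
    then have "?b < ?N - 1" using lt by linarith
    then have "(3::nat)^?b \<le> ?K" by (intro power_increasing) auto
    then show ?thesis using pow_le3[OF lt(3) N2] by linarith
  next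
    case False
    then have "?c < ?N - 1" using lt ne by linarith
    then have "(3::nat)^?c \<le> ?K" by (intro power_increasing) auto
    then show ?thesis using pow_le3[OF lt(2) N2] by linarith
  qed
  have "(3::nat)^?N = 9 * ?K"
  proof -
    have "?N = (?N - 2) + 2" using N2 by simp
    then have "(3::nat)^?N = 3^(?N-2) * 3^2" by (metis power_add)
    then show ?thesis by simp
  qed
  moreover have "?K \<ge> 1" by simp
  moreover have "V m r j = 3^?a + 3^?b + 3^?c" by (simp add: V_def)
  ultimately show ?thesis using pa pbc by arith
qed

lemma modulus_gt: "m > 0 \<Longrightarrow> modulus m > 1"
proof -
  assume "m > 0"
  then have "(3::int)^(2*m) \<ge> 3^2" by (intro power_increasing) auto
  then show ?thesis unfolding modulus_def by simp
qed

lemma pow_mod: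
  assumes "m > 0"
  shows "(3::int)^k mod modulus m = 3^(k mod (2*m)) mod modulus m"
proof -
  let ?n = "modulus m" let ?N = "2*m"
  have n1: "?n > 1" using modulus_gt[OF assms] .
  have t: "(3::int)^?N mod ?n = 1"
  proof -
    have "(3::int)^?N = ?n + 1" unfolding modulus_def by simp
    then show ?thesis using n1 by simp
  qed
  have q: "((3::int)^?N)^(k div ?N) mod ?n = 1"
  proof -
    have "((3::int)^?N)^(k div ?N) mod ?n = (((3::int)^?N mod ?n)^(k div ?N)) mod ?n"
      by (rule power_mod[symmetric])
    also have "\<dots> = 1" using t n1 by simp
    finally show ?thesis .
  qed
  have "(3::int)^k = 3^(?N*(k div ?N) + k mod ?N)" by simp
  also have "\<dots> = ((3::int)^?N)^(k div ?N) * 3^(k mod ?N)" by (simp only: power_add power_mult)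
  finally have k: "(3::int)^k = ((3::int)^?N)^(k div ?N) * 3^(k mod ?N)" .
  have "(3::int)^k mod ?n = ((((3::int)^?N)^(k div ?N) mod ?n) * 3^(k mod ?N)) mod ?n"
    unfolding k by (rule mod_mult_left_eq[symmetric])
  then show ?thesis using q by simp
qed

lemma elem:
  fixes m i j :: nat
  assumes "m > 0"
  shows "(3^i * (3^j * (3^m + 1) + 1)) mod modulus m = int (V m i j)"
proof -
  let ?n = "modulus m" let ?N = "2*m"
  have e: "(3::int)^i * (3^j * (3^m + 1) + 1) = 3^i * (3^j * 3^m) + 3^i * 3^j + 3^i"
    by (simp add: distrib_left distrib_right)
  also have "\<dots> = 3^(i+j+m) + 3^(i+j) + 3^i" by (simp only: power_add mult.assoc)
  finally have e: "(3::int)^i * (3^j * (3^m + 1) + 1) = 3^(i+j+m) + 3^(i+j) + 3^i" .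
  have c: "\<And>k. [(3::int)^k = 3^(k mod ?N)] (mod ?n)" unfolding cong_def using pow_mod[OF assms] .
  have "[(3::int)^(i+j+m) + 3^(i+j) + 3^i = 3^((i+j+m) mod ?N) + 3^((i+j) mod ?N) + 3^(i mod ?N)] (mod ?n)"
    by (intro cong_add c)
  then have "((3::int)^(i+j+m) + 3^(i+j) + 3^i) mod ?n = int (V m i j) mod ?n"
    unfolding cong_def V_def by (simp add: add.commute add.left_commute)
  also have "\<dots> = int (V m i j)"
  proof -
    have v: "V m i j < 3^(2*m) - 1" using V_bound[OF assms] .
    have "int (3^(2*m) - 1) = 3^(2*m) - 1" by (simp add: of_nat_diff)
    then have "int (V m i j) < ?n" unfolding modulus_def using v by linarith
    then show ?thesis by simp
  qed
  finally show ?thesis using e by simp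
qed



definition G :: "nat \<Rightarrow> nat \<Rightarrow> nat \<Rightarrow> int" where
  "G m i j = (- int (V m i j)) mod modulus m"

lemma S1j_eq:
  assumes "m > 0"
  shows "S1j m j = (\<lambda>i. G m i j) ` {..<2*m}"
proof -
  have g: "\<And>i. (- (3^i * (3^j * (3^m + 1) + 1))) mod modulus m = G m i j"
  proof -
    fix i
    have "(- ((3::int)^i * (3^j * (3^m + 1) + 1))) mod modulus m
        = (- (((3::int)^i * (3^j * (3^m + 1) + 1)) mod modulus m)) mod modulus m"
      by (rule mod_minus_eq[symmetric])
    then show "(- (3^i * (3^j * (3^m + 1) + 1))) mod modulus m = G m i j"
      unfolding G_def using elem[OF assms] by simp
  qed
  have "S1j m j = {G m i j | i. i \<le> 2*m - 1}" unfolding S1j_def g ..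
  also have "\<dots> = (\<lambda>i. G m i j) ` {i. i \<le> 2*m - 1}" by (rule setcompr_eq_image)
  also have "{i. i \<le> 2*m - 1} = {..<2*m}" using assms by auto
  finally show ?thesis .
qed

lemma G_V:
  assumes "m > 0" "G m i1 j1 = G m i2 j2"
  shows "V m i1 j1 = V m i2 j2"
proof (rule ccontr)
  assume ne: "V m i1 j1 \<noteq> V m i2 j2"
  let ?n = "modulus m" let ?a = "int (V m i1 j1)" let ?b = "int (V m i2 j2)"
  have b1: "?a < ?n" "?b < ?n"
  proof -
    have eq: "int (3^(2*m) - 1) = 3^(2*m) - 1" by (simp add: of_nat_diff)
    have "?a < int (3^(2*m) - 1)" using V_bound[OF assms(1)] by (simp only: of_nat_less_iff)
    then show "?a < ?n" unfolding modulus_def using eq by linarith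
    have "?b < int (3^(2*m) - 1)" using V_bound[OF assms(1)] by (simp only: of_nat_less_iff)
    then show "?b < ?n" unfolding modulus_def using eq by linarith
  qed
  have "?n dvd (- ?a - (- ?b))" using assms(2) unfolding G_def by (simp add: mod_eq_dvd_iff)
  then have d: "?n dvd (?b - ?a)" by simp
  have "?b - ?a \<noteq> 0" using ne by simp
  then have "\<bar>?n\<bar> \<le> \<bar>?b - ?a\<bar>" using dvd_imp_le_int d by blast
  then show False using b1 by simp
qed

lemma V_shift:
  assumes "m > 0"
  shows "V m i ((j+m) mod (2*m)) = V m i j"
proof -
  let ?N = "2*m"
  have a: "(i + (j+m) mod ?N) mod ?N = (i+j+m) mod ?N" by (simp add: mod_add_right_eq add.assoc)
  have "i + (j+m) mod ?N + m = (j+m) mod ?N + (i+m)" by arith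
  then have "(i + (j+m) mod ?N + m) mod ?N = ((j+m) mod ?N + (i+m)) mod ?N" by (rule arg_cong)
  also have "\<dots> = ((j+m) + (i+m)) mod ?N" by (rule mod_add_left_eq)
  also have "\<dots> = (i + j + ?N) mod ?N"
  proof -
    have "(j+m) + (i+m) = i + j + ?N" by simp
    then show ?thesis by (rule arg_cong)
  qed
  also have "\<dots> = (i+j) mod ?N" by simp
  finally have b: "(i + (j+m) mod ?N + m) mod ?N = (i+j) mod ?N" .
  show ?thesis unfolding V_def a b by linarith
qed

lemma S1j_same:
  assumes "m > 0"
  shows "S1j m ((j+m) mod (2*m)) = S1j m j"
  unfolding S1j_eq[OF assms] G_def V_shift[OF assms] ..

lemma S1j_disj:
  assumes "m > 0" "j1 < 2*m" "j2 < 2*m" "j1 \<noteq> j2" "j1 \<noteq> (j2+m) mod (2*m)"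
  shows "S1j m j1 \<inter> S1j m j2 = {}"
proof (rule ccontr)
  assume "S1j m j1 \<inter> S1j m j2 \<noteq> {}"
  then obtain i1 i2 where i: "i1 < 2*m" "i2 < 2*m" "G m i1 j1 = G m i2 j2"
    unfolding S1j_eq[OF assms(1)] by auto
  then have "V m i1 j1 = V m i2 j2" using G_V[OF assms(1)] by blast
  then show False using V_inj[OF assms(1) i(1,2) assms(2,3)] assms(4,5) by blast
qed

lemma S1j_card:
  assumes "m > 0" "j < 2*m"
  shows "card (S1j m j) = 2*m"
proof -
  have "inj_on (\<lambda>i. G m i j) {..<2*m}"
  proof (rule inj_onI)
    fix i1 i2 assume "i1 \<in> {..<2*m}" "i2 \<in> {..<2*m}" "G m i1 j = G m i2 j"
    then show "i1 = i2" using G_V[OF assms(1)] V_inj[OF assms(1) _ _ assms(2) assms(2)] by blast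
  qed
  then show ?thesis unfolding S1j_eq[OF assms(1)] by (simp add: card_image)
qed

theorem lemma3p17:
  fixes m :: nat
  assumes "m \<ge> 2"
  shows "(\<forall>j\<in>{0..2*m-1}. card (S1j m j) = 2*m)
       \<and> (\<forall>j1\<in>{0..2*m-1}. \<forall>j2\<in>{0..2*m-1}. j1 \<noteq> j2 \<longrightarrow>
            ((S1j m j1 \<inter> S1j m j2 = {} \<or> S1j m j1 = S1j m j2)
             \<and> (S1j m j1 = S1j m j2 \<longleftrightarrow> j1 mod (2*m) = (j2 + m) mod (2*m))))
       \<and> card (S1 m) = 2*m^2"
proof -
  have m0: "m > 0" using assms by simp
  have rng: "{0..2*m-1} = {..<2*m}" using m0 by auto
  have p1: "\<forall>j\<in>{0..2*m-1}. card (S1j m j) = 2*m" unfolding rng using S1j_card[OF m0] by blast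
  have p2: "\<forall>j1\<in>{0..2*m-1}. \<forall>j2\<in>{0..2*m-1}. j1 \<noteq> j2 \<longrightarrow>
            ((S1j m j1 \<inter> S1j m j2 = {} \<or> S1j m j1 = S1j m j2)
             \<and> (S1j m j1 = S1j m j2 \<longleftrightarrow> j1 mod (2*m) = (j2 + m) mod (2*m)))"
  proof (intro ballI impI)
    fix j1 j2 assume j1: "j1 \<in> {0..2*m-1}" and j2: "j2 \<in> {0..2*m-1}" and ne: "j1 \<noteq> j2"
    have "j1 \<le> 2*m-1" "j2 \<le> 2*m - 1" using j1 j2 by simp_all
    then have j1': "j1 < 2*m" and j2': "j2 < 2*m" using m0 by arith+
    have jm: "j1 mod (2*m) = j1" using j1' by simp
    show "(S1j m j1 \<inter> S1j m j2 = {} \<or> S1j m j1 = S1j m j2)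
             \<and> (S1j m j1 = S1j m j2 \<longleftrightarrow> j1 mod (2*m) = (j2 + m) mod (2*m))"
    proof (cases "j1 = (j2+m) mod (2*m)")
      case True
      then have "S1j m j1 = S1j m j2" using S1j_same[OF m0, of j2] by simp
      then show ?thesis using True jm by simp
    next
      case False
      have d: "S1j m j1 \<inter> S1j m j2 = {}" using S1j_disj[OF m0 j1' j2' ne False] .
      have "S1j m j1 \<noteq> {}" using S1j_card[OF m0 j1'] m0 by auto
      then have "S1j m j1 \<noteq> S1j m j2" using d by auto
      then show ?thesis using d False jm by simp
    qed
  qed
  have U: "S1 m = (\<Union>j\<in>{..<m}. S1j m j)"
  proof
    show "S1 m \<subseteq> (\<Union>j\<in>{..<m}. S1j m j)"
    proof
      fix x assume "x \<in> S1 m"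
      then obtain j where j: "j < 2*m" "x \<in> S1j m j" unfolding S1_def rng by auto
      show "x \<in> (\<Union>j\<in>{..<m}. S1j m j)"
      proof (cases "j < m")
        case True then show ?thesis using j by auto
      next
        case False
        then have "(j - m + m) mod (2*m) = j" using j by simp
        then have "S1j m j = S1j m (j - m)" using S1j_same[OF m0, of "j-m"] by simp
        moreover have "j - m < m" using j False by simp
        ultimately show ?thesis using j by auto
      qed
    qed
    show "(\<Union>j\<in>{..<m}. S1j m j) \<subseteq> S1 m" unfolding S1_def rng by (rule UN_mono) auto
  qed
  have "card (\<Union>j\<in>{..<m}. S1j m j) = (\<Sum>j\<in>{..<m}. card (S1j m j))"
  proof (rule card_UN_disjoint)
    show "finite {..<m}" by simp
    show "\<forall>j\<in>{..<m}. finite (S1j m j)" unfolding S1j_eq[OF m0] by simp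
    show "\<forall>j1\<in>{..<m}. \<forall>j2\<in>{..<m}. j1 \<noteq> j2 \<longrightarrow> S1j m j1 \<inter> S1j m j2 = {}"
    proof (intro ballI impI)
      fix j1 j2 assume a: "j1 \<in> {..<m}" "j2 \<in> {..<m}" "j1 \<noteq> j2"
      have "(j2 + m) mod (2*m) = j2 + m" using a by simp
      then have "j1 \<noteq> (j2+m) mod (2*m)" using a by simp
      then show "S1j m j1 \<inter> S1j m j2 = {}" using S1j_disj[OF m0] a by simp
    qed
  qed
  also have "\<dots> = (\<Sum>j\<in>{..<m}. 2*m)" using S1j_card[OF m0] by simp
  also have "\<dots> = 2*m^2" by (simp add: power2_eq_square)
  finally have p3: "card (S1 m) = 2*m^2" using U by simp
  show ?thesis using p1 p2 p3 by blast
qed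


end
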